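(* Let $\pi\colon\mathsf{States}\to\mathbb{R}_{\ge0}$ be a potential function, let $C$ be a program and let $f,g\in\mathbb{T}$. If $\mathrm{mod}(C)\cap\mathrm{Vars}(g)=\emptyset$, then $$\mathsf{aert}_\pi[\![C]\!]\big((f\oplus g)-\pi\big)\;\preceq\;\Big(\big(\mathsf{aert}_\pi[\![C]\!](f-\pi)+\pi\big)\oplus g\Big)-\pi .$$
   Context: States and programs. Fix a finite set $\mathrm{Vars}$ of variables; values are $\mathbb{N}$, locations are $\mathbb{N}_{>0}$. A stack is $s\colon \mathrm{Vars}\to\mathbb{N}$; a heap is a partial map $h$ from a finite set $\mathrm{dom}(h)\subseteq\mathbb{N}_{>0}$ to $\mathbb{N}$. $h_1\perp h_2$ means disjoint domains; then $h_1\star h_2$ is their union; $h_\emptyset$ is the empty heap. $\mathsf{States}$ is the set of pairs $(s,h)$. $s(e)$ is the value of a (heap-independent) arithmetic expression $e$ under $s$, $s\models\varphi$ means the Boolean expression $\varphi$ holds under $s$, $s[x\mapsto v]$ is the updated stack. Programs are generated by $C ::= \mathtt{tick}(e) \mid x:=e \mid x:=\mathtt{alloc}(e) \mid \langle e\rangle:=e' \mid x:=\langle e\rangle \mid \mathtt{free}(e) \mid \{C\}[p]\{C\} \mid \mathtt{if}(\varphi)\{C\}\mathtt{else}\{C\} \mid C;C \mid \mathtt{while}(\varphi)\{C\}$, where $p$ is an expression with $s(p)\in[0,1]\cap\mathbb{Q}$ for all $s$. The statements other than tick, probabilistic choice, conditional, sequencing and loops are called atomic. $\mathrm{mod}(C)$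 is the set of variables potentially modified by $C$, i.e. the variables $x$ occurring as the target of $x:=e$, $x:=\mathtt{alloc}(e)$ or $x:=\langle e\rangle$ in $C$. For a runtime $g$, $x\notin\mathrm{Vars}(g)$ means $g(s[x\mapsto v],h)=g(s,h)$ for all $(s,h)$ and $v$. Runtimes. $\mathbb{T}$ is the set of functions $\mathsf{States}\to[0,\infty]$, ordered pointwise by $\preceq$; arithmetic is pointwise with $0\cdot\infty=0$. $[\varphi]$ is the $0/1$-valued Iverson bracket. Truncated subtraction: $a\dot- b=\max(a-b,0)$, $\infty\dot- b=\infty$ for finite $b$, $a\dot-\infty=0$. Separating sum $(f\oplus g)(s,h)=\min\{f(s,h_1)+g(s,h_2)\mid h=h_1\star h_2\}$ (also applied to nonnegative functions with values in $[0,\infty]$); $(f \mathbin{-\!\!\ominus} g)(s,h)=\sup\{g(s,h\star h')\dot- f(s,h')\mid h'\perp h\}$; $(\inf y\colon f)(s,h)=\inf_{v\in\mathbb{N}} f(s[y\mapsto v],h)$, $(\sup y\colon f)(s,h)=\sup_{v\in\mathbb{N}}f(s[y\mapsto v],h)$; $f[x/e](s,h)=f(s[x\mapsto s(e)],h)$. $\mathsf{tm}(e)(s,h)=s(e)$ if $h=h_\emptyset$, else $\infty$; $[e\mapsto e'](s,h)=0$ if $\mathrm{dom}(h)=\{s(e)\}$ and $h(s(e))=s(e')$, else $\infty$; $[e\mapsto -](s,h)=0$ if $\mathrm{dom}(h)=\{s(e)\}$, else $\infty$; $\bigoplus_{i=1}^{e} f_i$ is the separating sum over $i=1,\dots,s(e)$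 (empty one: $[\mathsf{emp}]$, which is $0$ if $h=h_\emptyset$, else $\infty$). $\mathsf{ert}[\![C]\!]\colon\mathbb{T}\to\mathbb{T}$ (with $v$ fresh): $\mathsf{ert}[\![\mathtt{tick}(e)]\!](f)=\mathsf{tm}(e)\oplus f$; $\mathsf{ert}[\![x:=e]\!](f)=f[x/e]$; $\mathsf{ert}[\![x:=\mathtt{alloc}(e)]\!](f)=\sup v\colon (\bigoplus_{i=1}^{e}[v+i-1\mapsto 0])\mathbin{-\!\!\ominus} f[x/v]$; $\mathsf{ert}[\![\langle e\rangle:=e']\!](f)=[e\mapsto-]\oplus([e\mapsto e']\mathbin{-\!\!\ominus} f)$; $\mathsf{ert}[\![x:=\langle e\rangle]\!](f)=\inf v\colon [e\mapsto v]\oplus([e\mapsto v]\mathbin{-\!\!\ominus} f[x/v])$; $\mathsf{ert}[\![\mathtt{free}(e)]\!](f)=[e\mapsto-]\oplus f$; $\mathsf{ert}[\![C_1;C_2]\!](f)=\mathsf{ert}[\![C_1]\!](\mathsf{ert}[\![C_2]\!](f))$; conditional: $[\varphi]\cdot\mathsf{ert}[\![C_1]\!](f)+[\neg\varphi]\cdot\mathsf{ert}[\![C_2]\!](f)$; probabilistic choice: $p\cdot\mathsf{ert}[\![C_1]\!](f)+(1-p)\cdot\mathsf{ert}[\![C_2]\!](f)$; $\mathsf{ert}[\![\mathtt{while}(\varphi)\{C\}]\!](f)=\mathrm{lfp}\, g.\ [\neg\varphi]\cdot f+[\varphi]\cdot\mathsf{ert}[\![C]\!](g)$. Amortized runtimes.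 A potential function is $\pi\colon\mathsf{States}\to\mathbb{R}_{\ge0}$. $\mathbb{A}_\pi=\{X\colon\mathsf{States}\to\mathbb{R}\cup\{\infty\}\mid -\pi\le X\}$, ordered pointwise (complete lattice, least element $-\pi$). $\mathsf{aert}_\pi[\![C]\!]\colon\mathbb{A}_\pi\to\mathbb{A}_\pi$: $\mathsf{aert}_\pi[\![\mathtt{tick}(e)]\!](X)=e+X$; for atomic $C$ other than tick, $\mathsf{aert}_\pi[\![C]\!](X)=\mathsf{ert}[\![C]\!](X+\pi)-\pi$; sequencing by composition; conditional $[\varphi]\cdot\mathsf{aert}_\pi[\![C_1]\!](X)+[\neg\varphi]\cdot\mathsf{aert}_\pi[\![C_2]\!](X)$; probabilistic choice $p\cdot\mathsf{aert}_\pi[\![C_1]\!](X)+(1-p)\cdot\mathsf{aert}_\pi[\![C_2]\!](X)$; $\mathsf{aert}_\pi[\![\mathtt{while}(\varphi)\{C'\}]\!](X)=\mathrm{lfp}\,Y.\ [\neg\varphi]\cdot X+[\varphi]\cdot\mathsf{aert}_\pi[\![C']\!](Y)$ in $(\mathbb{A}_\pi,\preceq)$. *)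

theory Defs
  imports Complex_Main "HOL-Library.Extended_Nonnegative_Real" "HOL-Library.Extended_Real"
begin

typedef heap = "{h :: nat \<rightharpoonup> nat. finite (dom h) \<and> 0 \<notin> dom h}"
  morphisms hmap Abs_heap
  by (rule exI[of _ Map.empty]) auto

definition hemp :: heap where "hemp = Abs_heap Map.empty"

definition hdisj :: "heap \<Rightarrow> heap \<Rightarrow> bool" where
  "hdisj h1 h2 \<longleftrightarrow> dom (hmap h1) \<inter> dom (hmap h2) = {}"

definition hunion :: "heap \<Rightarrow> heap \<Rightarrow> heap" where
  "hunion h1 h2 = Abs_heap (hmap h1 ++ hmap h2)"

type_synonym 'v stack = "'v \<Rightarrow> nat"
type_synonym 'v state = "'v stack \<times> heap"
type_synonym 'v rt = "'v state \<Rightarrow> ennreal"     (* the runtimes T *)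
type_synonym 'v art = "'v state \<Rightarrow> ereal"      (* candidates for A_pi *)

section \<open>Programs (expressions are shallow: functions of the stack)\<close>

datatype 'v prog =
    Tick "'v stack \<Rightarrow> nat"
  | Assign 'v "'v stack \<Rightarrow> nat"
  | Alloc 'v "'v stack \<Rightarrow> nat"
  | Store "'v stack \<Rightarrow> nat" "'v stack \<Rightarrow> nat"
  | Load 'v "'v stack \<Rightarrow> nat"
  | Free "'v stack \<Rightarrow> nat"
  | PChoice "'v prog" "'v stack \<Rightarrow> real" "'v prog"
  | If "'v stack \<Rightarrow> bool" "'v prog" "'v prog"
  | Seq "'v prog" "'v prog"
  | While "'v stack \<Rightarrow> bool" "'v prog"

primrec wf_prog :: "'v prog \<Rightarrow> bool" where
  "wf_prog (Tick e) = True"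
| "wf_prog (Assign x e) = True"
| "wf_prog (Alloc x e) = True"
| "wf_prog (Store e e') = True"
| "wf_prog (Load x e) = True"
| "wf_prog (Free e) = True"
| "wf_prog (PChoice C1 p C2) =
     ((\<forall>s. 0 \<le> p s \<and> p s \<le> 1 \<and> p s \<in> \<rat>) \<and> wf_prog C1 \<and> wf_prog C2)"
| "wf_prog (If b C1 C2) = (wf_prog C1 \<and> wf_prog C2)"
| "wf_prog (Seq C1 C2) = (wf_prog C1 \<and> wf_prog C2)"
| "wf_prog (While b C) = wf_prog C"

primrec modv :: "'v prog \<Rightarrow> 'v set" where
  "modv (Tick e) = {}"
| "modv (Assign x e) = {x}"
| "modv (Alloc x e) = {x}"
| "modv (Store e e') = {}"
| "modv (Load x e) = {x}"
| "modv (Free e) = {}"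
| "modv (PChoice C1 p C2) = modv C1 \<union> modv C2"
| "modv (If b C1 C2) = modv C1 \<union> modv C2"
| "modv (Seq C1 C2) = modv C1 \<union> modv C2"
| "modv (While b C) = modv C"

definition vars_of :: "('v state \<Rightarrow> 'a) \<Rightarrow> 'v set" where
  "vars_of g = {x. \<not> (\<forall>s h v. g (s(x := v), h) = g (s, h))}"

definition tsub :: "ennreal \<Rightarrow> ennreal \<Rightarrow> ennreal" where
  "tsub a b = (if b = top then 0 else a - b)"

definition sepsum :: "'v rt \<Rightarrow> 'v rt \<Rightarrow> 'v rt" where
  "sepsum f g = (\<lambda>(s, h). INF p \<in> {(h1, h2). hdisj h1 h2 \<and> h = hunion h1 h2}.
                              f (s, fst p) + g (s, snd p))"

definition wand :: "'v rt \<Rightarrow> 'v rt \<Rightarrow> 'v rt" where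
  "wand f g = (\<lambda>(s, h). SUP h' \<in> {h'. hdisj h' h}. tsub (g (s, hunion h h')) (f (s, h')))"

definition tm :: "('v stack \<Rightarrow> nat) \<Rightarrow> 'v rt" where
  "tm e = (\<lambda>(s, h). if h = hemp then of_nat (e s) else top)"

definition emp :: "'v rt" where
  "emp = (\<lambda>(s, h). if h = hemp then 0 else top)"

definition pt :: "('v stack \<Rightarrow> nat) \<Rightarrow> ('v stack \<Rightarrow> nat) \<Rightarrow> 'v rt" where
  "pt e e' = (\<lambda>(s, h). if dom (hmap h) = {e s} \<and> hmap h (e s) = Some (e' s) then 0 else top)"

definition ptany :: "('v stack \<Rightarrow> nat) \<Rightarrow> 'v rt" where
  "ptany e = (\<lambda>(s, h). if dom (hmap h) = {e s} then 0 else top)"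

primrec bigsep :: "(nat \<Rightarrow> 'v rt) \<Rightarrow> nat \<Rightarrow> 'v rt" where
  "bigsep F 0 = emp"
| "bigsep F (Suc n) = sepsum (bigsep F n) (F (Suc n))"

definition subst :: "'v rt \<Rightarrow> 'v \<Rightarrow> ('v stack \<Rightarrow> nat) \<Rightarrow> 'v rt" where
  "subst f x e = (\<lambda>(s, h). f (s(x := e s), h))"

primrec ert :: "'v prog \<Rightarrow> 'v rt \<Rightarrow> 'v rt" where
  "ert (Tick e) f = sepsum (tm e) f"
| "ert (Assign x e) f = subst f x e"
| "ert (Alloc x e) f = (\<lambda>\<sigma>. SUP v\<in>(UNIV::nat set).
      wand (\<lambda>\<tau>. bigsep (\<lambda>i. pt (\<lambda>_. v + i - 1) (\<lambda>_. 0)) (e (fst \<tau>)) \<tau>)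
           (subst f x (\<lambda>_. v)) \<sigma>)"
| "ert (Store e e') f = sepsum (ptany e) (wand (pt e e') f)"
| "ert (Load x e) f = (\<lambda>\<sigma>. INF v\<in>(UNIV::nat set).
      sepsum (pt e (\<lambda>_. v)) (wand (pt e (\<lambda>_. v)) (subst f x (\<lambda>_. v))) \<sigma>)"
| "ert (Free e) f = sepsum (ptany e) f"
| "ert (PChoice C1 p C2) f =
     (\<lambda>\<sigma>. ennreal (p (fst \<sigma>)) * ert C1 f \<sigma> + ennreal (1 - p (fst \<sigma>)) * ert C2 f \<sigma>)"
| "ert (If b C1 C2) f = (\<lambda>\<sigma>. if b (fst \<sigma>) then ert C1 f \<sigma> else ert C2 f \<sigma>)"
| "ert (Seq C1 C2) f = ert C1 (ert C2 f)"
| "ert (While b C) f = lfp (\<lambda>g \<sigma>. if b (fst \<sigma>) then ert C g \<sigma> else f \<sigma>)"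

definition atom_aert :: "('v state \<Rightarrow> real) \<Rightarrow> 'v prog \<Rightarrow> 'v art \<Rightarrow> 'v art" where
  "atom_aert \<pi> C X =
     (\<lambda>\<sigma>. enn2ereal (ert C (\<lambda>\<tau>. e2ennreal (X \<tau> + ereal (\<pi> \<tau>))) \<sigma>) - ereal (\<pi> \<sigma>))"

text \<open>Least fixed point in the complete lattice A_pi = {X. -pi <= X} (Knaster-Tarski).\<close>
definition lfp_A :: "('v state \<Rightarrow> real) \<Rightarrow> ('v art \<Rightarrow> 'v art) \<Rightarrow> 'v art" where
  "lfp_A \<pi> F = Inf {Y. (\<forall>\<sigma>. - ereal (\<pi> \<sigma>) \<le> Y \<sigma>) \<and> F Y \<le> Y}"

primrec aert :: "('v state \<Rightarrow> real) \<Rightarrow> 'v prog \<Rightarrow> 'v art \<Rightarrow> 'v art" where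
  "aert \<pi> (Tick e) X = (\<lambda>\<sigma>. ereal (real (e (fst \<sigma>))) + X \<sigma>)"
| "aert \<pi> (Assign x e) X = atom_aert \<pi> (Assign x e) X"
| "aert \<pi> (Alloc x e) X = atom_aert \<pi> (Alloc x e) X"
| "aert \<pi> (Store e e') X = atom_aert \<pi> (Store e e') X"
| "aert \<pi> (Load x e) X = atom_aert \<pi> (Load x e) X"
| "aert \<pi> (Free e) X = atom_aert \<pi> (Free e) X"
| "aert \<pi> (PChoice C1 p C2) X =
     (\<lambda>\<sigma>. ereal (p (fst \<sigma>)) * aert \<pi> C1 X \<sigma> + ereal (1 - p (fst \<sigma>)) * aert \<pi> C2 X \<sigma>)"
| "aert \<pi> (If b C1 C2) X = (\<lambda>\<sigma>. if b (fst \<sigma>) then aert \<pi> C1 X \<sigma> else aert \<pi> C2 X \<sigma>)"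
| "aert \<pi> (Seq C1 C2) X = aert \<pi> C1 (aert \<pi> C2 X)"
| "aert \<pi> (While b C) X =
     lfp_A \<pi> (\<lambda>Y \<sigma>. if b (fst \<sigma>) then aert \<pi> C Y \<sigma> else X \<sigma>)"

end

theory Submission
  imports Defs
begin


lemma hmap_Abs: "finite (dom m) \<Longrightarrow> 0 \<notin> dom m \<Longrightarrow> hmap (Abs_heap m) = m"
  by (simp add: Abs_heap_inverse)

lemma hmap_fin: "finite (dom (hmap h))" and hmap_0: "0 \<notin> dom (hmap h)"
  using hmap[of h] by auto

lemma hmap_hemp[simp]: "hmap hemp = Map.empty"
  unfolding hemp_def by (simp add: hmap_Abs)

lemma hmap_hunion[simp]: "hmap (hunion h1 h2) = hmap h1 ++ hmap h2"
  unfolding hunion_def using hmap_fin[of h1] hmap_fin[of h2] hmap_0[of h1] hmap_0[of h2]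
  by (subst hmap_Abs) auto

lemma heap_eq: "h1 = h2 \<longleftrightarrow> hmap h1 = hmap h2" by (simp add: hmap_inject)

lemma hunion_hemp[simp]: "hunion hemp h = h" "hunion h hemp = h"
  by (simp_all add: heap_eq)

lemma hdisj_hemp[simp]: "hdisj hemp h" "hdisj h hemp"
  by (simp_all add: hdisj_def)

lemma hdisj_sym: "hdisj a b \<longleftrightarrow> hdisj b a"
  by (auto simp: hdisj_def)

lemma hunion_comm: "hdisj a b \<Longrightarrow> hunion a b = hunion b a"
  unfolding heap_eq hdisj_def hmap_hunion by (rule map_add_comm)

lemma hunion_assoc: "hunion (hunion a b) c = hunion a (hunion b c)"
  by (simp add: heap_eq)

lemma hdisj_hunion_right[simp]: "hdisj a (hunion b c) \<longleftrightarrow> hdisj a b \<and> hdisj a c"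
  by (auto simp: hdisj_def)

lemma hdisj_hunion_left[simp]: "hdisj (hunion b c) a \<longleftrightarrow> hdisj b a \<and> hdisj c a"
  by (auto simp: hdisj_def)

lemma sepsum_apply: "sepsum f g (s, h) = (INF p \<in> {(h1, h2). hdisj h1 h2 \<and> h = hunion h1 h2}. f (s, fst p) + g (s, snd p))"
  by (simp add: sepsum_def)

lemma sepsum_le: "hdisj h1 h2 \<Longrightarrow> h = hunion h1 h2 \<Longrightarrow> sepsum f g (s, h) \<le> f (s, h1) + g (s, h2)"
  unfolding sepsum_apply by (rule INF_lower2[of "(h1,h2)"]) auto

lemma le_sepsum: "(\<And>h1 h2. hdisj h1 h2 \<Longrightarrow> h = hunion h1 h2 \<Longrightarrow> x \<le> f (s, h1) + g (s, h2)) \<Longrightarrow> x \<le> sepsum f g (s, h)"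
  unfolding sepsum_apply by (rule INF_greatest) auto

lemma sepsum_mono: "f \<le> f' \<Longrightarrow> g \<le> g' \<Longrightarrow> sepsum f g \<le> sepsum f' g'"
  unfolding le_fun_def sepsum_def by (auto intro!: INF_mono' add_mono)

lemma le_INF_add: 
  fixes x c :: ennreal
  assumes "\<And>i. i \<in> A \<Longrightarrow> x \<le> F i + c"
  shows "x \<le> (INF i\<in>A. F i) + c"
proof (cases "c = top")
  case True then show ?thesis by simp
next
  case False
  have "x - c \<le> (INF i\<in>A. F i)"
    using assms False by (intro INF_greatest) (auto simp: ennreal_minus_le_iff add.commute)
  moreover have "x \<le> c + (x - c)" using ennreal_minus_le_iff[of x c "x - c"] by simp
  ultimately show ?thesis by (metis add.commute add_left_mono order_trans)
qed

lemma tsub_frame: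
  fixes a b c d :: ennreal
  assumes "a \<le> b + d" shows "tsub a c \<le> tsub b c + d"
proof (cases "c = top")
  case True then show ?thesis by (simp add: tsub_def)
next
  case False
  have "b \<le> c + (b - c)" using ennreal_minus_le_iff[of b c "b - c"] by simp
  then have "a \<le> c + ((b - c) + d)" using assms
    by (metis add.assoc add_right_mono order_trans)
  then have "a - c \<le> (b - c) + d" using False by (simp add: ennreal_minus_le_iff)
  then show ?thesis using False by (simp add: tsub_def)
qed

lemma tsub_mono: "(a::ennreal) \<le> b \<Longrightarrow> tsub a c \<le> tsub b c"
  by (simp add: tsub_def ennreal_minus_mono)

lemma wand_mono: "g \<le> g' \<Longrightarrow> wand f g \<le> wand f g'"
  unfolding le_fun_def wand_def by (auto intro!: SUP_mono' tsub_mono)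

lemma subst_mono: "g \<le> g' \<Longrightarrow> subst g x e \<le> subst g' x e"
  unfolding le_fun_def subst_def by auto

lemma wand_frame: "wand A (sepsum F g) \<le> sepsum (wand A F) g"
  unfolding le_fun_def
proof (clarify)
  fix s h
  show "wand A (sepsum F g) (s, h) \<le> sepsum (wand A F) g (s, h)"
  proof (rule le_sepsum)
    fix h1 h2 assume d: "hdisj h1 h2" and hh: "h = hunion h1 h2"
    show "wand A (sepsum F g) (s, h) \<le> wand A F (s, h1) + g (s, h2)"
      unfolding wand_def split
    proof (rule SUP_least)
      fix h' assume "h' \<in> {h'. hdisj h' h}"
      then have d': "hdisj h' h1" "hdisj h' h2" using hh by auto
      have e: "hunion h h' = hunion (hunion h1 h') h2"
        using hh d d' by (metis hunion_assoc hunion_comm hdisj_sym)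
      have "sepsum F g (s, hunion h h') \<le> F (s, hunion h1 h') + g (s, h2)"
        using e d d' by (intro sepsum_le) (auto simp: hdisj_sym)
      then have "tsub (sepsum F g (s, hunion h h')) (A (s, h')) \<le> tsub (F (s, hunion h1 h')) (A (s, h')) + g (s, h2)"
        by (rule tsub_frame)
      also have "\<dots> \<le> (SUP h'\<in>{h'. hdisj h' h1}. tsub (F (s, hunion h1 h')) (A (s, h'))) + g (s, h2)"
        using d' by (intro add_right_mono SUP_upper) auto
      finally show "tsub (sepsum F g (s, hunion h h')) (A (s, h')) \<le> (SUP h'\<in>{h'. hdisj h' h1}. tsub (F (s, hunion h1 h')) (A (s, h'))) + g (s, h2)" .
    qed
  qed
qed

lemma sepsum_assoc_frame: "sepsum P (sepsum W g) \<le> sepsum (sepsum P W) g"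
  unfolding le_fun_def
proof (clarify)
  fix s h
  show "sepsum P (sepsum W g) (s, h) \<le> sepsum (sepsum P W) g (s, h)"
  proof (rule le_sepsum)
    fix h12 h3 assume d: "hdisj h12 h3" and hh: "h = hunion h12 h3"
    show "sepsum P (sepsum W g) (s, h) \<le> sepsum P W (s, h12) + g (s, h3)"
      unfolding sepsum_apply[of P W]
    proof (rule le_INF_add)
      fix p assume "p \<in> {(h1, h2). hdisj h1 h2 \<and> h12 = hunion h1 h2}"
      then obtain h1 h2 where p: "p = (h1, h2)" "hdisj h1 h2" "h12 = hunion h1 h2" by auto
      have "sepsum P (sepsum W g) (s, h) \<le> P (s, h1) + sepsum W g (s, hunion h2 h3)"
        using p d hh by (intro sepsum_le) (auto simp: hunion_assoc)
      also have "\<dots> \<le> P (s, h1) + (W (s, h2) + g (s, h3))"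
        using p d by (intro add_left_mono sepsum_le) auto
      finally show "sepsum P (sepsum W g) (s, h) \<le> P (s, fst p) + W (s, snd p) + g (s, h3)"
        using p by (simp add: add.assoc)
    qed
  qed
qed


lemma ert_mono: "f \<le> f' \<Longrightarrow> ert C f \<le> ert C f'"
proof (induction C arbitrary: f f')
  case (Tick e) then show ?case by (simp add: sepsum_mono)
next
  case (Assign x e) then show ?case by (simp add: subst_mono)
next
  case (Alloc x e) then show ?case
    by (auto simp: le_fun_def intro!: SUP_mono' wand_mono[THEN le_funD] subst_mono)
next
  case (Store e e') then show ?case by (simp add: sepsum_mono wand_mono)
next
  case (Load x e) then show ?case
    by (auto simp: le_fun_def intro!: INF_mono' sepsum_mono[THEN le_funD] wand_mono subst_mono)
next
  case (Free e) then show ?case by (simp add: sepsum_mono)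
next
  case (PChoice C1 p C2) then show ?case
    by (auto simp: le_fun_def intro!: add_mono mult_left_mono)
next
  case (If b C1 C2) then show ?case by (auto simp: le_fun_def)
next
  case (Seq C1 C2) then show ?case by simp
next
  case (While b C) then show ?case
    by (simp, intro lfp_mono) (auto simp: le_fun_def)
qed

lemma mono_G: "mono (\<lambda>g \<sigma>. if b (fst \<sigma>) then ert C g \<sigma> else f \<sigma>)"
  by (rule monoI, rule le_funI) (auto dest: ert_mono[of _ _ C] le_funD)

lemma subst_sepsum: "x \<notin> vars_of g \<Longrightarrow> subst (sepsum f g) x e = sepsum (subst f x e) g"
  unfolding subst_def sepsum_def vars_of_def by (auto intro!: ext)

lemma sepsum_stack_cong: "(\<And>h'. A (s, h') = A' (s, h')) \<Longrightarrow> sepsum A g (s, h) = sepsum A' g (s, h)"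
  by (simp add: sepsum_apply)

lemma INF_sepsum: "(INF v\<in>V. sepsum (A v) g \<sigma>) \<le> sepsum (\<lambda>\<tau>. INF v\<in>V. A v \<tau>) g \<sigma>"
proof (cases \<sigma>)
  case (Pair s h)
  show ?thesis unfolding Pair
  proof (rule le_sepsum)
    fix h1 h2 assume "hdisj h1 h2" "h = hunion h1 h2"
    then show "(INF v\<in>V. sepsum (A v) g (s, h)) \<le> (INF v\<in>V. A v (s, h1)) + g (s, h2)"
      by (intro le_INF_add) (meson INF_lower2 sepsum_le)
  qed
qed

lemma pchoice_sepsum:
  assumes "0 \<le> P s" "P s \<le> 1"
  shows "ennreal (P s) * sepsum A g (s, h) + ennreal (1 - P s) * sepsum B g (s, h)
     \<le> sepsum (\<lambda>\<tau>. ennreal (P (fst \<tau>)) * A \<tau> + ennreal (1 - P (fst \<tau>)) * B \<tau>) g (s, h)"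
proof (rule le_sepsum)
  fix h1 h2 assume d: "hdisj h1 h2" "h = hunion h1 h2"
  have "ennreal (P s) * sepsum A g (s, h) + ennreal (1 - P s) * sepsum B g (s, h)
     \<le> ennreal (P s) * (A (s, h1) + g (s, h2)) + ennreal (1 - P s) * (B (s, h1) + g (s, h2))"
    using d by (intro add_mono mult_left_mono sepsum_le) auto
  also have "\<dots> = ennreal (P s) * A (s, h1) + ennreal (1 - P s) * B (s, h1) + (ennreal (P s) + ennreal (1 - P s)) * g (s, h2)"
    by (simp add: algebra_simps)
  also have "ennreal (P s) + ennreal (1 - P s) = 1"
    using assms by (simp flip: ennreal_plus)
  finally show "ennreal (P s) * sepsum A g (s, h) + ennreal (1 - P s) * sepsum B g (s, h)
     \<le> ennreal (P (fst (s, h1))) * A (s, h1) + ennreal (1 - P (fst (s, h1))) * B (s, h1) + g (s, h2)"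
    by simp
qed



lemma ert_frame:
  "wf_prog C \<Longrightarrow> modv C \<inter> vars_of g = {} \<Longrightarrow> ert C (sepsum f g) \<le> sepsum (ert C f) g"
proof (induction C arbitrary: f)
  case (Tick e) then show ?case by (simp add: sepsum_assoc_frame)
next
  case (Assign x e) then show ?case by (simp add: subst_sepsum)
next
  case (Alloc x e)
  then have x: "x \<notin> vars_of g" by simp
  show ?case
  proof (rule le_funI)
    fix \<sigma>
    show "ert (Alloc x e) (sepsum f g) \<sigma> \<le> sepsum (ert (Alloc x e) f) g \<sigma>"
      unfolding ert.simps subst_sepsum[OF x]
    proof (rule SUP_least)
      fix v :: nat
      let ?B = "\<lambda>\<tau>. bigsep (\<lambda>i. pt (\<lambda>_. v + i - 1) (\<lambda>_. 0)) (e (fst \<tau>)) \<tau>"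
      have "wand ?B (sepsum (subst f x (\<lambda>_. v)) g) \<sigma> \<le> sepsum (wand ?B (subst f x (\<lambda>_. v))) g \<sigma>"
        by (rule le_funD[OF wand_frame])
      also have "\<dots> \<le> sepsum (\<lambda>\<sigma>. SUP v\<in>UNIV. wand (\<lambda>\<tau>. bigsep (\<lambda>i. pt (\<lambda>_. v + i - 1) (\<lambda>_. 0)) (e (fst \<tau>)) \<tau>) (subst f x (\<lambda>_. v)) \<sigma>) g \<sigma>"
        by (rule le_funD[OF sepsum_mono[OF _ order_refl]], rule le_funI, rule SUP_upper2[of v]) auto
      finally show "wand ?B (sepsum (subst f x (\<lambda>_. v)) g) \<sigma> \<le> \<dots>" .
    qed
  qed
next
  case (Store e e')
  have "ert (Store e e') (sepsum f g) \<le> sepsum (ptany e) (sepsum (wand (pt e e') f) g)"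
    by (simp add: sepsum_mono wand_frame)
  also have "\<dots> \<le> sepsum (ert (Store e e') f) g" by (simp add: sepsum_assoc_frame)
  finally show ?case .
next
  case (Load x e)
  then have x: "x \<notin> vars_of g" by simp
  show ?case
  proof (rule le_funI)
    fix \<sigma>
    have "ert (Load x e) (sepsum f g) \<sigma> \<le> (INF v\<in>UNIV. sepsum (sepsum (pt e (\<lambda>_. v)) (wand (pt e (\<lambda>_. v)) (subst f x (\<lambda>_. v)))) g \<sigma>)"
      unfolding ert.simps subst_sepsum[OF x]
      by (intro INF_mono' order_trans[OF sepsum_mono[OF order_refl wand_frame, THEN le_funD]] sepsum_assoc_frame[THEN le_funD])
    also have "\<dots> \<le> sepsum (ert (Load x e) f) g \<sigma>"
      unfolding ert.simps by (rule INF_sepsum)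
    finally show "ert (Load x e) (sepsum f g) \<sigma> \<le> sepsum (ert (Load x e) f) g \<sigma>" .
  qed
next
  case (Free e) then show ?case by (simp add: sepsum_assoc_frame)
next
  case (PChoice C1 p C2)
  show ?case
  proof (rule le_funI)
    fix \<sigma> :: "'a state"
    obtain s h where \<sigma>: "\<sigma> = (s, h)" by force
    have w: "wf_prog C1" "wf_prog C2" and m: "modv C1 \<inter> vars_of g = {}" "modv C2 \<inter> vars_of g = {}"
      using PChoice.prems by auto
    have 1: "ert C1 (sepsum f g) \<sigma> \<le> sepsum (ert C1 f) g \<sigma>"
      by (rule le_funD[OF PChoice.IH(1)[OF w(1) m(1)]])
    have 2: "ert C2 (sepsum f g) \<sigma> \<le> sepsum (ert C2 f) g \<sigma>"
      by (rule le_funD[OF PChoice.IH(2)[OF w(2) m(2)]])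
    have "ert (PChoice C1 p C2) (sepsum f g) \<sigma> \<le> ennreal (p s) * sepsum (ert C1 f) g (s, h) + ennreal (1 - p s) * sepsum (ert C2 f) g (s, h)"
      using 1 2 unfolding \<sigma> by (simp add: add_mono mult_left_mono)
    also have "\<dots> \<le> sepsum (ert (PChoice C1 p C2) f) g \<sigma>"
      using PChoice.prems by (simp add: \<sigma> pchoice_sepsum)
    finally show "ert (PChoice C1 p C2) (sepsum f g) \<sigma> \<le> sepsum (ert (PChoice C1 p C2) f) g \<sigma>" .
  qed
next
  case (If b C1 C2)
  show ?case
  proof (rule le_funI)
    fix \<sigma> :: "'a state"
    obtain s h where \<sigma>: "\<sigma> = (s, h)" by force
    show "ert (If b C1 C2) (sepsum f g) \<sigma> \<le> sepsum (ert (If b C1 C2) f) g \<sigma>"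
    proof (cases "b s")
      case True
      have "ert C1 (sepsum f g) \<sigma> \<le> sepsum (ert C1 f) g \<sigma>"
        using If by (auto intro: le_funD)
      also have "\<dots> = sepsum (ert (If b C1 C2) f) g \<sigma>"
        unfolding \<sigma> by (rule sepsum_stack_cong) (simp add: True)
      finally show ?thesis using True by (simp add: \<sigma>)
    next
      case False
      have "ert C2 (sepsum f g) \<sigma> \<le> sepsum (ert C2 f) g \<sigma>"
        using If by (auto intro: le_funD)
      also have "\<dots> = sepsum (ert (If b C1 C2) f) g \<sigma>"
        unfolding \<sigma> by (rule sepsum_stack_cong) (simp add: False)
      finally show ?thesis using False by (simp add: \<sigma>)
    qed
  qed
next
  case (Seq C1 C2)
  have w: "wf_prog C1" "wf_prog C2" and m: "modv C1 \<inter> vars_of g = {}" "modv C2 \<inter> vars_of g = {}"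
    using Seq.prems by auto
  have "ert C2 (sepsum f g) \<le> sepsum (ert C2 f) g"
    by (rule Seq.IH(2)[OF w(2) m(2)])
  then have "ert C1 (ert C2 (sepsum f g)) \<le> ert C1 (sepsum (ert C2 f) g)"
    by (rule ert_mono)
  also have "\<dots> \<le> sepsum (ert C1 (ert C2 f)) g"
    by (rule Seq.IH(1)[OF w(1) m(1)])
  finally show ?case by simp
next
  case (While b C)
  define L where "L = lfp (\<lambda>k \<sigma>. if b (fst \<sigma>) then ert C k \<sigma> else f \<sigma>)"
  have L: "L = (\<lambda>\<sigma>. if b (fst \<sigma>) then ert C L \<sigma> else f \<sigma>)"
    unfolding L_def by (rule lfp_unfold[OF mono_G])
  have "lfp (\<lambda>k \<sigma>. if b (fst \<sigma>) then ert C k \<sigma> else sepsum f g \<sigma>) \<le> sepsum L g"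
  proof (rule lfp_lowerbound, rule le_funI)
    fix \<sigma> :: "'a state"
    obtain s h where \<sigma>: "\<sigma> = (s, h)" by force
    show "(if b (fst \<sigma>) then ert C (sepsum L g) \<sigma> else sepsum f g \<sigma>) \<le> sepsum L g \<sigma>"
    proof (cases "b s")
      case True
      have "ert C (sepsum L g) \<sigma> \<le> sepsum (ert C L) g \<sigma>"
        using While by (auto intro: le_funD)
      also have "\<dots> = sepsum L g \<sigma>"
        unfolding \<sigma> by (rule sepsum_stack_cong) (use fun_cong[OF L, of "(s, _)"] True in simp)
      finally show ?thesis using True by (simp add: \<sigma>)
    next
      case False
      have "sepsum f g \<sigma> = sepsum L g \<sigma>"
        unfolding \<sigma> by (rule sepsum_stack_cong) (use fun_cong[OF L, of "(s, _)"] False in simp)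
      then show ?thesis using False by (simp add: \<sigma>)
    qed
  qed
  then show ?case by (simp add: L_def)
qed



lemma ereal_cancel: "(a - ereal r) + ereal r = (a::ereal)"
  by (cases a) auto

lemma e2_Phi[simp]: "e2ennreal (enn2ereal x - ereal r + ereal r) = x"
  by (simp add: ereal_cancel)

lemma Phi_mono: "a \<le> b \<Longrightarrow> enn2ereal a - ereal r \<le> enn2ereal b - ereal r"
  by (simp add: ereal_minus_mono less_eq_ennreal.rep_eq)

lemma pchoice_arith_fin:
  assumes "0 \<le> p" "p \<le> 1" "0 \<le> a" "0 \<le> b"
  shows "ereal p * (enn2ereal (ennreal a) - ereal r) + ereal (1 - p) * (enn2ereal (ennreal b) - ereal r)
       = enn2ereal (ennreal p * ennreal a + ennreal (1 - p) * ennreal b) - ereal r"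
  using assms by (simp add: enn2ereal_ennreal flip: ennreal_mult ennreal_plus) (simp add: algebra_simps)

lemma pchoice_arith_inf:
  assumes "0 \<le> p" "p \<le> 1" 
  shows "ereal p * (enn2ereal top - ereal r) + ereal (1 - p) * (enn2ereal B - ereal r)
       = enn2ereal (ennreal p * top + ennreal (1 - p) * B) - ereal r"
  using assms apply (cases "p = 0"; cases "p = 1"; cases B rule: ennreal_cases) apply (auto simp: ennreal_top_mult ennreal_mult_top)
  done

lemma Phi_reflect: "enn2ereal a - ereal r \<le> enn2ereal b - ereal r \<Longrightarrow> a \<le> b"
  by (metis Phi_mono enn2ereal_inject ereal_cancel nle_le)

lemma Phi_lb: "- ereal r \<le> enn2ereal a - ereal r"
  by (metis Phi_mono Phi_reflect enn2ereal_nonneg ereal_minus(8) minus_ereal_0 zero_ennreal.rep_eq)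

lemma tick_arith: "ereal (real n) + (enn2ereal y - ereal r) = enn2ereal (of_nat n + y) - ereal r"
  by (simp add: add_diff_eq_ereal plus_ennreal.rep_eq)

lemma tm_sepsum: "sepsum (tm e) g (s, h) = of_nat (e s) + g (s, h)"
proof (rule antisym)
  show "sepsum (tm e) g (s, h) \<le> of_nat (e s) + g (s, h)"
    using sepsum_le[of hemp h h "tm e" g s] by (simp add: tm_def)
  show "of_nat (e s) + g (s, h) \<le> sepsum (tm e) g (s, h)"
  proof (rule le_sepsum)
    fix h1 h2 assume "hdisj h1 h2" "h = hunion h1 h2"
    then show "of_nat (e s) + g (s, h) \<le> tm e (s, h1) + g (s, h2)"
      by (cases "h1 = hemp") (auto simp: tm_def)
  qed
qed

lemma pchoice_arith:
  assumes "0 \<le> p" "p \<le> 1"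
  shows "ereal p * (enn2ereal A - ereal r) + ereal (1 - p) * (enn2ereal B - ereal r)
       = enn2ereal (ennreal p * A + ennreal (1 - p) * B) - ereal r"
proof (cases "A = top")
  case True then show ?thesis using pchoice_arith_inf[OF assms] by simp
next
  case nA: False
  show ?thesis
  proof (cases "B = top")
    case True
    have h: "ereal (1 - p) * (enn2ereal top - ereal r) + ereal p * (enn2ereal A - ereal r)
       = enn2ereal (ennreal (1 - p) * top + ennreal p * A) - ereal r"
      using pchoice_arith_inf[of "1 - p" r A] assms by simp
    show ?thesis unfolding True by (subst add.commute, subst (2) add.commute, rule h)
  next
    case False
    obtain a b where "A = ennreal a" "B = ennreal b" "0 \<le> a" "0 \<le> b"
      using nA False by (metis ennreal_cases)
    then show ?thesis using pchoice_arith_fin[OF assms] by simp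
  qed
qed

definition Phi :: "('v state \<Rightarrow> real) \<Rightarrow> 'v rt \<Rightarrow> 'v art" where
  "Phi \<pi> g = (\<lambda>\<sigma>. enn2ereal (g \<sigma>) - ereal (\<pi> \<sigma>))"

lemma Phi_mono': "g \<le> g' \<Longrightarrow> Phi \<pi> g \<le> Phi \<pi> g'"
  unfolding Phi_def le_fun_def by (auto intro: Phi_mono)

lemma Phi_reflect': "Phi \<pi> g \<le> Phi \<pi> g' \<Longrightarrow> g \<le> g'"
  unfolding Phi_def le_fun_def by (auto intro: Phi_reflect)

lemma Phi_surj: "(\<forall>\<sigma>. - ereal (\<pi> \<sigma>) \<le> Y \<sigma>) \<Longrightarrow> Phi \<pi> (\<lambda>\<sigma>. e2ennreal (Y \<sigma> + ereal (\<pi> \<sigma>))) = Y"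
  unfolding Phi_def
proof (rule ext)
  fix \<sigma> assume a: "\<forall>\<sigma>. - ereal (\<pi> \<sigma>) \<le> Y \<sigma>"
  then have "0 \<le> Y \<sigma> + ereal (\<pi> \<sigma>)"
    using a[rule_format, of \<sigma>] by (cases "Y \<sigma>") auto
  then show "enn2ereal (e2ennreal (Y \<sigma> + ereal (\<pi> \<sigma>))) - ereal (\<pi> \<sigma>) = Y \<sigma>"
    using a[rule_format, of \<sigma>] by (cases "Y \<sigma>") (auto simp: enn2ereal_e2ennreal)
qed



lemma aert_Phi: "wf_prog C \<Longrightarrow> aert \<pi> C (Phi \<pi> g) = Phi \<pi> (ert C g)"
proof (induction C arbitrary: g)
  case (Tick e)
  show ?case
    by (rule ext) (auto simp: Phi_def tm_sepsum tick_arith split: prod.splits)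
next
  case (Assign x e) then show ?case by (simp add: atom_aert_def Phi_def)
next
  case (Alloc x e) then show ?case by (simp add: atom_aert_def Phi_def)
next
  case (Store x e) then show ?case by (simp add: atom_aert_def Phi_def)
next
  case (Load x e) then show ?case by (simp add: atom_aert_def Phi_def)
next
  case (Free e) then show ?case by (simp add: atom_aert_def Phi_def)
next
  case (PChoice C1 p C2)
  then have w: "wf_prog C1" "wf_prog C2" "\<And>s. 0 \<le> p s" "\<And>s. p s \<le> 1" by auto
  show ?case
    by (rule ext) (simp only: aert.simps ert.simps PChoice.IH(1)[OF w(1)] PChoice.IH(2)[OF w(2)], simp add: Phi_def pchoice_arith[OF w(3,4)])
next
  case (If b C1 C2)
  then show ?case by (auto simp: Phi_def)
next
  case (Seq C1 C2)
  then show ?case by simp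
next
  case (While b C)
  then have w: "wf_prog C" by simp
  define G where "G = (\<lambda>k \<sigma>. if b (fst \<sigma>) then ert C k \<sigma> else g \<sigma>)"
  define F where "F = (\<lambda>Y \<sigma>. if b (fst \<sigma>) then aert \<pi> C Y \<sigma> else Phi \<pi> g \<sigma>)"
  define L where "L = lfp G"
  have FG: "F (Phi \<pi> k) = Phi \<pi> (G k)" for k
    unfolding F_def G_def by (rule ext) (simp only: While.IH[OF w], simp add: Phi_def)
  have L: "G L = L" unfolding L_def G_def by (rule lfp_unfold[OF mono_G, symmetric])
  have "lfp_A \<pi> F = Phi \<pi> L"
    unfolding lfp_A_def
  proof (rule antisym)
    show "Inf {Y. (\<forall>\<sigma>. - ereal (\<pi> \<sigma>) \<le> Y \<sigma>) \<and> F Y \<le> Y} \<le> Phi \<pi> L"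
    proof (rule Inf_lower)
      have "\<forall>\<sigma>. - ereal (\<pi> \<sigma>) \<le> Phi \<pi> L \<sigma>" unfolding Phi_def using Phi_lb by blast
      moreover have "F (Phi \<pi> L) \<le> Phi \<pi> L" by (simp add: FG L)
      ultimately show "Phi \<pi> L \<in> {Y. (\<forall>\<sigma>. - ereal (\<pi> \<sigma>) \<le> Y \<sigma>) \<and> F Y \<le> Y}" by simp
    qed
    show "Phi \<pi> L \<le> Inf {Y. (\<forall>\<sigma>. - ereal (\<pi> \<sigma>) \<le> Y \<sigma>) \<and> F Y \<le> Y}"
    proof (rule Inf_greatest)
      fix Y assume "Y \<in> {Y. (\<forall>\<sigma>. - ereal (\<pi> \<sigma>) \<le> Y \<sigma>) \<and> F Y \<le> Y}"
      then have Y: "\<forall>\<sigma>. - ereal (\<pi> \<sigma>) \<le> Y \<sigma>" "F Y \<le> Y" by auto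
      define k where "k = (\<lambda>\<sigma>. e2ennreal (Y \<sigma> + ereal (\<pi> \<sigma>)))"
      have k: "Phi \<pi> k = Y" unfolding k_def by (rule Phi_surj[OF Y(1)])
      have "Phi \<pi> (G k) \<le> Phi \<pi> k" using Y(2) by (simp add: FG[symmetric] k)
      then have "G k \<le> k" by (rule Phi_reflect')
      then have "L \<le> k" unfolding L_def by (rule lfp_lowerbound)
      then show "Phi \<pi> L \<le> Y" using k Phi_mono' by metis
    qed
  qed
  then show ?case by (simp add: F_def L_def G_def)
qed

theorem mainTheorem5:
  fixes \<pi> :: "('v::finite) state \<Rightarrow> real" and C :: "'v prog" and f g :: "'v rt"
  assumes "\<forall>\<sigma>. 0 \<le> \<pi> \<sigma>"
    and "wf_prog C"
    and "modv C \<inter> vars_of g = {}"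
  shows "aert \<pi> C (\<lambda>\<sigma>. enn2ereal (sepsum f g \<sigma>) - ereal (\<pi> \<sigma>))
         \<le> (\<lambda>\<sigma>. enn2ereal (sepsum
                   (\<lambda>\<tau>. e2ennreal (aert \<pi> C (\<lambda>\<rho>. enn2ereal (f \<rho>) - ereal (\<pi> \<rho>)) \<tau> + ereal (\<pi> \<tau>)))
                   g \<sigma>) - ereal (\<pi> \<sigma>))"
proof -
  have 1: "aert \<pi> C (\<lambda>\<sigma>. enn2ereal (sepsum f g \<sigma>) - ereal (\<pi> \<sigma>)) = Phi \<pi> (ert C (sepsum f g))"
    using aert_Phi[OF assms(2), of \<pi> "sepsum f g"] by (simp add: Phi_def)
  have 2: "(\<lambda>\<tau>. e2ennreal (aert \<pi> C (\<lambda>\<rho>. enn2ereal (f \<rho>) - ereal (\<pi> \<rho>)) \<tau> + ereal (\<pi> \<tau>))) = ert C f"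
    using aert_Phi[OF assms(2), of \<pi> f] by (simp add: Phi_def)
  show ?thesis unfolding 1 2 using ert_frame[OF assms(2,3), of f]
    by (fold Phi_def) (rule Phi_mono')
qed


end
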